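(* Let $\alpha,\beta,\lambda,\varepsilon_1,\varepsilon_2$ be positive real numbers and consider the planar system $$s'=s\big(\varepsilon_2-\beta-\varepsilon_2 s+(\varepsilon_1-\varepsilon_2-\lambda)i\big),\qquad i'=i\big(\varepsilon_2-\varepsilon_1-\alpha+(\lambda-\varepsilon_2)s+(\varepsilon_1-\varepsilon_2)i\big)$$ on $D_1=\{(s,i): s\ge0,\ i\ge0,\ s+i\le1\}$. Let $T_0=\varepsilon_2-\beta$ and $T_1=\varepsilon_2-\varepsilon_1-\alpha$. If $T_0<0$ and $T_1<0$, then the origin is the only rest point of this system in $D_1$.
   Context: This is the special case $b=\beta_1=\gamma=0$ (with $\beta=\beta_2$) of the SIRS proportions system reduced to the $(s,i)$-plane. *)

theory Defs
  imports Complex_Main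
begin

definition sirs_s :: "real \<Rightarrow> real \<Rightarrow> real \<Rightarrow> real \<Rightarrow> real \<Rightarrow> real \<Rightarrow> real \<Rightarrow> real" where
  "sirs_s \<alpha> \<beta> lam \<epsilon>1 \<epsilon>2 s i = s * (\<epsilon>2 - \<beta> - \<epsilon>2 * s + (\<epsilon>1 - \<epsilon>2 - lam) * i)"

definition sirs_i :: "real \<Rightarrow> real \<Rightarrow> real \<Rightarrow> real \<Rightarrow> real \<Rightarrow> real \<Rightarrow> real \<Rightarrow> real" where
  "sirs_i \<alpha> \<beta> lam \<epsilon>1 \<epsilon>2 s i = i * (\<epsilon>2 - \<epsilon>1 - \<alpha> + (lam - \<epsilon>2) * s + (\<epsilon>1 - \<epsilon>2) * i)"

definition D1 :: "(real \<times> real) set" where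
  "D1 = {(s, i). s \<ge> 0 \<and> i \<ge> 0 \<and> s + i \<le> 1}"

definition rest_point :: "real \<Rightarrow> real \<Rightarrow> real \<Rightarrow> real \<Rightarrow> real \<Rightarrow> real \<times> real \<Rightarrow> bool" where
  "rest_point \<alpha> \<beta> lam \<epsilon>1 \<epsilon>2 p \<longleftrightarrow>
     sirs_s \<alpha> \<beta> lam \<epsilon>1 \<epsilon>2 (fst p) (snd p) = 0 \<and> sirs_i \<alpha> \<beta> lam \<epsilon>1 \<epsilon>2 (fst p) (snd p) = 0"

end

theory Submission
  imports Defs
begin

lemma key:
  fixes \<alpha> \<beta> lam \<epsilon>1 \<epsilon>2 s i r :: real
  assumes "\<alpha> > 0" "\<beta> > 0" "lam > 0" "\<epsilon>1 > 0" "\<epsilon>2 > 0"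
    and "\<epsilon>2 - \<beta> < 0" and "\<epsilon>2 - \<epsilon>1 - \<alpha> < 0"
    and "s \<ge> 0" "i \<ge> 0" "s + i \<le> 1"
    and e1: "s * (\<epsilon>2 - \<beta> - \<epsilon>2 * s + (\<epsilon>1 - \<epsilon>2 - lam) * i) = 0"
    and e2: "i * (\<epsilon>2 - \<epsilon>1 - \<alpha> + (lam - \<epsilon>2) * s + (\<epsilon>1 - \<epsilon>2) * i) = 0"
  shows "s = 0 \<and> i = 0"
proof (rule ccontr)
  assume H: "\<not> (s = 0 \<and> i = 0)"
  define r where "r = 1 - s - i"
  have r0: "r \<ge> 0" "r \<le> 1" using assms r_def by auto
  have ep: "\<epsilon>2 * r < \<beta>" using r0 assms by (smt (verit) mult_right_le_one_le)
  have ea: "(\<epsilon>2 - \<epsilon>1) * r < \<alpha>"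
  proof (cases "\<epsilon>2 \<ge> \<epsilon>1")
    case True
    then have "(\<epsilon>2 - \<epsilon>1) * r \<le> \<epsilon>2 - \<epsilon>1" using r0 by (simp add: mult_left_le)
    then show ?thesis using assms by linarith
  next
    case False
    then have "(\<epsilon>2 - \<epsilon>1) * r \<le> 0" using r0 by (simp add: mult_nonpos_nonneg)
    then show ?thesis using assms by linarith
  qed
  show False
  proof (cases "s = 0")
    case True
    then have "i \<noteq> 0" using H by auto
    then have "\<epsilon>2 - \<epsilon>1 - \<alpha> + (\<epsilon>1 - \<epsilon>2) * i = 0" using e2 True by simp
    moreover have "i = 1 - r" using True r_def by simp
    ultimately have "(\<epsilon>2 - \<epsilon>1) * r = \<alpha>" by (simp add: algebra_simps)
    then show False using ea by simp
  next
    case s: False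
    then have f1: "\<epsilon>2 - \<beta> - \<epsilon>2 * s + (\<epsilon>1 - \<epsilon>2 - lam) * i = 0" using e1 by simp
    show False
    proof (cases "i = 0")
      case True
      then have "\<epsilon>2 * (1 - s) = \<beta>" using f1 by (simp add: algebra_simps)
      moreover have "\<epsilon>2 * (1 - s) \<le> \<epsilon>2" using assms by simp
      ultimately show False using assms by linarith
    next
      case False
      then have f2: "\<epsilon>2 - \<epsilon>1 - \<alpha> + (lam - \<epsilon>2) * s + (\<epsilon>1 - \<epsilon>2) * i = 0" using e2 by simp
      have ii: "i = 1 - r - s" using r_def by simp
      have ss: "s = 1 - r - i" using r_def by simp
      have A: "(lam - \<epsilon>1) * s = \<alpha> + (\<epsilon>1 - \<epsilon>2) * r" using f2 unfolding ii by (simp add: algebra_simps)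
      have B: "(lam - \<epsilon>1) * i = \<epsilon>2 * r - \<beta>" using f1 unfolding ss by (simp add: algebra_simps)
      have sp: "s > 0" "i > 0" using s False assms by auto
      show False
      proof (cases "lam > \<epsilon>1")
        case True
        then have "(lam - \<epsilon>1) * i > 0" using sp by simp
        then show False using B ep by linarith
      next
        case False
        then have "(lam - \<epsilon>1) * s \<le> 0" using sp by (simp add: mult_nonpos_nonneg)
        moreover have "(\<epsilon>1 - \<epsilon>2) * r = - ((\<epsilon>2 - \<epsilon>1) * r)" by (simp add: algebra_simps)
        ultimately show False using A ea by linarith
      qed
    qed
  qed
qed

theorem proposition3p1:
  fixes \<alpha> \<beta> lam \<epsilon>1 \<epsilon>2 :: real
  assumes "\<alpha> > 0" "\<beta> > 0" "lam > 0" "\<epsilon>1 > 0" "\<epsilon>2 > 0"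
    and "\<epsilon>2 - \<beta> < 0" and "\<epsilon>2 - \<epsilon>1 - \<alpha> < 0"
  shows "{p \<in> D1. rest_point \<alpha> \<beta> lam \<epsilon>1 \<epsilon>2 p} = {(0, 0)}"
proof
  show "{(0, 0)} \<subseteq> {p \<in> D1. rest_point \<alpha> \<beta> lam \<epsilon>1 \<epsilon>2 p}"
    by (simp add: D1_def rest_point_def sirs_s_def sirs_i_def)
  show "{p \<in> D1. rest_point \<alpha> \<beta> lam \<epsilon>1 \<epsilon>2 p} \<subseteq> {(0, 0)}"
  proof clarify
    fix s i assume "(s, i) \<in> D1" "rest_point \<alpha> \<beta> lam \<epsilon>1 \<epsilon>2 (s, i)"
    then show "s = 0 \<and> i = 0"
      using key[OF assms, of s i] by (auto simp: D1_def rest_point_def sirs_s_def sirs_i_def)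
  qed
qed

end
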